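(* Let $C_0$ be an uncountable subset of $\omega_1$ and for each $\alpha\in C_0$ let $\rho_\alpha,\omega_\alpha:[0,\infty)\to[0,\infty)$ be increasing functions with $\rho_\alpha(t)\le\omega_\alpha(t)$ for all $t\ge0$ and $\lim_{t\to\infty}\rho_\alpha(t)=\infty$. Then there exist increasing functions $\rho,\omega:[0,\infty)\to[0,\infty)$ and a decreasing sequence $C_0\supset C_1\supset C_2\supset\cdots$ of uncountable subsets of $\omega_1$ such that (i) $\rho(t)\le\omega(t)$ for all $t\ge0$ and $\lim_{t\to\infty}\rho(t)=\infty$; (ii) for all $k\in\mathbb{N}$, all $\alpha\in C_k$ and all $0\le t\le k$ we have $\rho(t)\le\rho_\alpha(t)$ and $\omega_\alpha(t)\le\omega(t)$. *)

theory Defs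
  imports Complex_Main "HOL-Library.Countable_Set"
begin

text \<open>The first uncountable ordinal omega_1, realised as the field of the
  canonical well-order cardSuc natLeq (the successor cardinal of aleph_0),
  whose order type is omega_1.\<close>
definition omega1 :: "nat set set" where
  "omega1 = Field (cardSuc natLeq)"

definition incr_nonneg :: "(real \<Rightarrow> real) \<Rightarrow> bool" where
  "incr_nonneg f \<longleftrightarrow> mono_on {0..} f \<and> (\<forall>t\<ge>0. f t \<ge> 0)"

end

theory Submission
  imports Defs
begin

definition goodset :: "(nat set \<Rightarrow> real \<Rightarrow> real) \<Rightarrow> (nat set \<Rightarrow> real \<Rightarrow> real) \<Rightarrow> nat \<Rightarrow> nat set set \<Rightarrow> nat \<Rightarrow> nat set set" where
  "goodset rhos omegas k C N = {\<alpha>\<in>C. real k \<le> rhos \<alpha> (real N) \<and> omegas \<alpha> (real k) \<le> real N}"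

definition pickN where
  "pickN rhos omegas k C = (SOME N. N \<ge> k \<and> \<not> countable (goodset rhos omegas k C N))"

fun Cs :: "(nat set \<Rightarrow> real \<Rightarrow> real) \<Rightarrow> (nat set \<Rightarrow> real \<Rightarrow> real) \<Rightarrow> nat set set \<Rightarrow> nat \<Rightarrow> nat set set" where
  "Cs rhos omegas C0 0 = C0"
| "Cs rhos omegas C0 (Suc k) = goodset rhos omegas (Suc k) (Cs rhos omegas C0 k) (pickN rhos omegas (Suc k) (Cs rhos omegas C0 k))"

lemma exN:
  assumes "C \<subseteq> C0" "\<not> countable C"
    and "\<forall>\<alpha>\<in>C0. filterlim (rhos \<alpha>) at_top at_top"
  shows "\<exists>N. N \<ge> k \<and> \<not> countable (goodset rhos omegas k C N)"
proof (rule ccontr)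
  assume H: "\<not> ?thesis"
  have "C \<subseteq> (\<Union>n. goodset rhos omegas k C (n + k))"
  proof
    fix \<alpha> assume a: "\<alpha> \<in> C"
    then have "filterlim (rhos \<alpha>) at_top at_top" using assms by auto
    then have "eventually (\<lambda>x. real k \<le> rhos \<alpha> x) at_top"
      using filterlim_at_top by blast
    then obtain X where X: "\<And>x. x \<ge> X \<Longrightarrow> real k \<le> rhos \<alpha> x"
      by (auto simp: eventually_at_top_linorder)
    define n where "n = nat \<lceil>max X (omegas \<alpha> (real k))\<rceil>"
    have m: "max X (omegas \<alpha> (real k)) \<le> real n" unfolding n_def by (rule real_nat_ceiling_ge)
    have "real (n + k) \<ge> X" "real (n+k) \<ge> omegas \<alpha> (real k)" using m by auto
    then have "\<alpha> \<in> goodset rhos omegas k C (n + k)" using a X unfolding goodset_def by auto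
    then show "\<alpha> \<in> (\<Union>n. goodset rhos omegas k C (n + k))" by blast
  qed
  moreover have "countable (\<Union>n. goodset rhos omegas k C (n + k))"
    using H by (intro countable_UN) auto
  ultimately have "countable C" by (rule countable_subset)
  then show False using assms(2) by simp
qed

lemma Cs_props:
  assumes "\<not> countable C0"
    and "\<forall>\<alpha>\<in>C0. filterlim (rhos \<alpha>) at_top at_top"
  shows "Cs rhos omegas C0 k \<subseteq> C0 \<and> \<not> countable (Cs rhos omegas C0 k)"
proof (induction k)
  case 0 then show ?case using assms by simp
next
  case (Suc k)
  let ?C = "Cs rhos omegas C0 k"
  have "\<exists>N. N \<ge> Suc k \<and> \<not> countable (goodset rhos omegas (Suc k) ?C N)"
    using exN[of ?C C0 rhos] Suc assms by blast
  then have "\<not> countable (goodset rhos omegas (Suc k) ?C (pickN rhos omegas (Suc k) ?C))"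
    unfolding pickN_def by (rule someI2_ex) auto
  moreover have "goodset rhos omegas (Suc k) ?C N \<subseteq> C0" for N
    using Suc unfolding goodset_def by auto
  ultimately show ?case by simp
qed

lemma pickN_ge:
  assumes "\<not> countable C0"
    and "\<forall>\<alpha>\<in>C0. filterlim (rhos \<alpha>) at_top at_top"
  shows "pickN rhos omegas (Suc k) (Cs rhos omegas C0 k) \<ge> Suc k"
proof -
  let ?C = "Cs rhos omegas C0 k"
  have "\<exists>N. N \<ge> Suc k \<and> \<not> countable (goodset rhos omegas (Suc k) ?C N)"
    using exN[of ?C C0 rhos, OF _ _ assms(2)] Cs_props[OF assms, where omegas=omegas and k=k] by blast
  then show ?thesis
    unfolding pickN_def by (rule someI2_ex) auto
qed

lemma Cs_anti: "j \<le> k \<Longrightarrow> Cs rhos omegas C0 k \<subseteq> Cs rhos omegas C0 j"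
  by (rule lift_Suc_antimono_le[where f="Cs rhos omegas C0"]) (auto simp: goodset_def)

theorem lemma4p1:
  fixes C0 :: "nat set set"
    and rhos omegas :: "nat set \<Rightarrow> real \<Rightarrow> real"
  assumes "C0 \<subseteq> omega1" and "\<not> countable C0"
    and "\<forall>\<alpha>\<in>C0. incr_nonneg (rhos \<alpha>) \<and> incr_nonneg (omegas \<alpha>)"
    and "\<forall>\<alpha>\<in>C0. \<forall>t\<ge>0. rhos \<alpha> t \<le> omegas \<alpha> t"
    and "\<forall>\<alpha>\<in>C0. filterlim (rhos \<alpha>) at_top at_top"
  shows "\<exists>\<rho> \<omega> (C :: nat \<Rightarrow> nat set set).
           incr_nonneg \<rho> \<and> incr_nonneg \<omega> \<and>
           C 0 = C0 \<and> (\<forall>k. C (Suc k) \<subseteq> C k) \<and>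
           (\<forall>k. C k \<subseteq> omega1 \<and> \<not> countable (C k)) \<and>
           (\<forall>t\<ge>0. \<rho> t \<le> \<omega> t) \<and> filterlim \<rho> at_top at_top \<and>
           (\<forall>k\<ge>1. \<forall>\<alpha>\<in>C k. \<forall>t. 0 \<le> t \<and> t \<le> real k \<longrightarrow>
               \<rho> t \<le> rhos \<alpha> t \<and> omegas \<alpha> t \<le> \<omega> t)"
proof -
  define C where "C = Cs rhos omegas C0"
  define Nn where "Nn j = pickN rhos omegas j (C (j - 1))" for j
  have CS: "C (Suc i) = goodset rhos omegas (Suc i) (C i) (Nn (Suc i))" for i
    by (simp add: C_def Nn_def)
  have Nge: "Nn j \<ge> j" if "j \<ge> 1" for j
    using that pickN_ge[OF assms(2) assms(5), where omegas=omegas and k="j - 1"] by (simp add: Nn_def C_def)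
  have Cprops: "C k \<subseteq> C0 \<and> \<not> countable (C k)" for k
    unfolding C_def using Cs_props[OF assms(2) assms(5)] by blast
  have mem: "real j \<le> rhos \<alpha> (real (Nn j)) \<and> omegas \<alpha> (real j) \<le> real (Nn j)"
    if h: "\<alpha> \<in> C k" "1 \<le> j" "j \<le> k" for \<alpha> j k
  proof -
    obtain i where i: "j = Suc i" using h(2) by (cases j) auto
    have "\<alpha> \<in> C j" using Cs_anti[OF h(3)] h(1) unfolding C_def by blast
    then show ?thesis unfolding i CS goodset_def by auto
  qed
  define S where "S t = {j. 1 \<le> j \<and> real (Nn j) \<le> t}" for t
  have Sfin: "finite (S t)" for t
  proof (rule finite_subset[of _ "{..nat \<lceil>t\<rceil>}"])
    show "S t \<subseteq> {..nat \<lceil>t\<rceil>}"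
    proof
      fix j assume "j \<in> S t"
      then have "real j \<le> t" using Nge unfolding S_def
        by (smt (verit) mem_Collect_eq of_nat_le_iff)
      then show "j \<in> {..nat \<lceil>t\<rceil>}"
        by (simp add: le_nat_iff le_ceiling_iff) 
    qed
  qed simp
  define \<rho> where "\<rho> t = real (Max (insert 0 (S t)))" for t
  define \<omega> where "\<omega> t = t + (\<Sum>j\<in>{1..nat \<lceil>t\<rceil> + 1}. real (Nn j))" for t
  have rho_le: "\<rho> t \<le> t" if "t \<ge> 0" for t
  proof -
    have "Max (insert 0 (S t)) \<in> insert 0 (S t)" using Sfin by (intro Max_in) auto
    then show ?thesis unfolding \<rho>_def
    proof
      assume "Max (insert 0 (S t)) \<in> S t"
      then show "real (Max (insert 0 (S t))) \<le> t" using Nge unfolding S_def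
        by (smt (verit) mem_Collect_eq of_nat_le_iff)
    qed (use that in simp)
  qed
  have sum_nn: "0 \<le> (\<Sum>j\<in>{1..nat \<lceil>t\<rceil> + 1}. real (Nn j))" for t
    by (intro sum_nonneg) auto
  have F1: "incr_nonneg \<rho>"
    unfolding incr_nonneg_def
  proof
    show "mono_on {0..} \<rho>"
    proof (rule mono_onI)
      fix s t :: real assume "s \<in> {0..}" "t \<in> {0..}" "s \<le> t"
      then have "insert 0 (S s) \<subseteq> insert 0 (S t)" unfolding S_def by auto
      then have "Max (insert 0 (S s)) \<le> Max (insert 0 (S t))"
        by (rule Max_mono) (use Sfin in auto)
      then show "\<rho> s \<le> \<rho> t" unfolding \<rho>_def by simp
    qed
  qed (simp add: \<rho>_def)
  have F2: "incr_nonneg \<omega>"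
    unfolding incr_nonneg_def
  proof
    show "mono_on {0..} \<omega>"
    proof (rule mono_onI)
      fix s t :: real assume "s \<in> {0..}" "t \<in> {0..}" "s \<le> t"
      then have "nat \<lceil>s\<rceil> \<le> nat \<lceil>t\<rceil>" by (intro nat_mono ceiling_mono)
      then have "(\<Sum>j\<in>{1..nat \<lceil>s\<rceil> + 1}. real (Nn j)) \<le> (\<Sum>j\<in>{1..nat \<lceil>t\<rceil> + 1}. real (Nn j))"
        by (intro sum_mono2) auto
      then show "\<omega> s \<le> \<omega> t" unfolding \<omega>_def using \<open>s \<le> t\<close> by linarith
    qed
  qed (use sum_nn in \<open>smt (verit) \<omega>_def\<close>)
  have F3: "\<forall>t\<ge>0. \<rho> t \<le> \<omega> t"
    using rho_le sum_nn unfolding \<omega>_def by (smt (verit))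
  have F4: "filterlim \<rho> at_top at_top"
    unfolding filterlim_at_top
  proof
    fix Z :: real
    define j where "j = nat \<lceil>Z\<rceil> + 1"
    have "eventually (\<lambda>x. real (Nn j) \<le> x) at_top" by (rule eventually_ge_at_top)
    then show "eventually (\<lambda>x. Z \<le> \<rho> x) at_top"
    proof (rule eventually_mono)
      fix x assume "real (Nn j) \<le> x"
      then have "j \<in> S x" unfolding S_def j_def by auto
      then have "j \<le> Max (insert 0 (S x))" using Sfin by simp
      moreover have "Z \<le> real j" unfolding j_def
        by (smt (verit) of_nat_add of_nat_1 real_nat_ceiling_ge)
      ultimately show "Z \<le> \<rho> x" unfolding \<rho>_def by linarith
    qed
  qed
  have F5: "\<forall>k\<ge>1. \<forall>\<alpha>\<in>C k. \<forall>t. 0 \<le> t \<and> t \<le> real k \<longrightarrow>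
               \<rho> t \<le> rhos \<alpha> t \<and> omegas \<alpha> t \<le> \<omega> t"
  proof (intro allI impI ballI conjI)
    fix k \<alpha> t assume k: "1 \<le> k" and a: "\<alpha> \<in> C k" and t: "0 \<le> t \<and> t \<le> real k"
    have a0: "\<alpha> \<in> C0" using a Cprops by blast
    then have ri: "incr_nonneg (rhos \<alpha>)" and oi: "incr_nonneg (omegas \<alpha>)" using assms(3) by auto
    have mr: "mono_on {0..} (rhos \<alpha>)" using ri by (simp add: incr_nonneg_def)
    have mw: "mono_on {0..} (omegas \<alpha>)" using oi by (simp add: incr_nonneg_def)
    have "Max (insert 0 (S t)) \<in> insert 0 (S t)" using Sfin by (intro Max_in) auto
    then show "\<rho> t \<le> rhos \<alpha> t"
    proof
      assume "Max (insert 0 (S t)) = 0"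
      then show ?thesis using ri t unfolding \<rho>_def incr_nonneg_def by simp
    next
      define J where "J = Max (insert 0 (S t))"
      assume "Max (insert 0 (S t)) \<in> S t"
      then have J: "1 \<le> J" "real (Nn J) \<le> t" unfolding S_def J_def by auto
      have "J \<le> Nn J" using Nge J by auto
      then have "J \<le> k" using J t by linarith
      then have "real J \<le> rhos \<alpha> (real (Nn J))" using mem[OF a J(1)] by blast
      also have "\<dots> \<le> rhos \<alpha> t"
        by (rule mono_onD[OF mr]) (use J t in auto)
      finally show ?thesis unfolding \<rho>_def J_def .
    qed
    define j where "j = max 1 (nat \<lceil>t\<rceil>)"
    have j1: "1 \<le> j" unfolding j_def by simp
    have "\<lceil>t\<rceil> \<le> int k" by (rule ceiling_le) (use t in simp)
    then have "nat \<lceil>t\<rceil> \<le> k" by (simp add: nat_le_iff)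
    then have jk: "j \<le> k" unfolding j_def using k by simp
    have "t \<le> real (nat \<lceil>t\<rceil>)" by (rule real_nat_ceiling_ge)
    also have "\<dots> \<le> real j" unfolding j_def by simp
    finally have tj: "t \<le> real j" .
    have "omegas \<alpha> t \<le> omegas \<alpha> (real j)"
      by (rule mono_onD[OF mw]) (use t tj in auto)
    also have "\<dots> \<le> real (Nn j)" using mem[OF a j1 jk] by blast
    also have "\<dots> \<le> (\<Sum>j\<in>{1..nat \<lceil>t\<rceil> + 1}. real (Nn j))"
    proof (rule member_le_sum)
      have "j \<le> nat \<lceil>t\<rceil> + 1" unfolding j_def
        using max.bounded_iff[of "1::nat" "nat \<lceil>t\<rceil>" "nat \<lceil>t\<rceil> + 1"] le_add1 le_add2 by blast
      then show "j \<in> {1..nat \<lceil>t\<rceil> + 1}" using j1 by (simp only: atLeastAtMost_iff)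
    qed auto
    also have "\<dots> \<le> \<omega> t" unfolding \<omega>_def using t by simp
    finally show "omegas \<alpha> t \<le> \<omega> t" .
  qed
  have F6: "C 0 = C0" by (simp add: C_def)
  have F7: "\<forall>k. C (Suc k) \<subseteq> C k"
    by (simp add: CS goodset_def del: Cs.simps)
  have F8: "\<forall>k. C k \<subseteq> omega1 \<and> \<not> countable (C k)"
    using Cprops assms(1) by blast
  show ?thesis
    apply (rule exI[of _ \<rho>])
    apply (rule exI[of _ \<omega>])
    apply (rule exI[of _ C])
    using F1 F2 F3 F4 F5 F6 F7 F8 by (intro conjI)
qed

end
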